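(* Let $m\in\mathbb{N}$, $m\geq 2$, let $G$ be an abelian (locally compact) group, let $(X,G)$ and $(X',G)$ be minimal continuous actions, and let $\pi\colon X\to X'$ be a factor map. If $\pi$ is an $m$-MEF map, then $(X',G)$ is $m$-equicontinuous.
   Context: Actions are continuous actions on compact metric spaces; a factor map is a continuous equivariant surjection. For a surjection $\varphi\colon X\to Y$, $R_\varphi$ is the equivalence relation $x\sim y\iff\varphi(x)=\varphi(y)$ and $X/\varphi$ denotes the set of its equivalence classes. $\pi_{eq}\colon X\to X_{eq}$ is the factor map onto the maximal equicontinuous factor of $(X,G)$ (the equicontinuous factor of which every equicontinuous factor is a factor). A factor map $\pi\colon X\to X'$ is an $m$-MEF map if every class $A\in X/\pi_{eq}$ is a union $A=\bigcup_{i=1}^{m-1}B_i$ of $m-1$ (not necessarily distinct) classes $B_i\in X/\pi$. $(X',G)$ is $m$-equicontinuous if for every $x\in X'$ and $\varepsilon>0$ there is $\delta>0$ such that for any $x_1,\dots,x_m$ in the open ball $B_\delta(x)$ and every $g\in G$ there exist $i\neq j$ with $d(gx_i,gx_j)<\varepsilon$. *)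

theory Defs
  imports "HOL-Analysis.Analysis"
begin

definition cont_action :: "'a::metric_space set \<Rightarrow> ('g::topological_ab_group_add \<Rightarrow> 'a \<Rightarrow> 'a) \<Rightarrow> bool" where
  "cont_action X act \<longleftrightarrow> compact X \<and>
     (\<forall>g. \<forall>x\<in>X. act g x \<in> X) \<and>
     (\<forall>x\<in>X. act 0 x = x) \<and>
     (\<forall>g h. \<forall>x\<in>X. act (g + h) x = act g (act h x)) \<and>
     continuous_on (UNIV \<times> X) (\<lambda>(g, x). act g x)"

definition minimal_action :: "'a::metric_space set \<Rightarrow> ('g::topological_ab_group_add \<Rightarrow> 'a \<Rightarrow> 'a) \<Rightarrow> bool" where
  "minimal_action X act \<longleftrightarrow> X \<noteq> {} \<and>
     (\<forall>Y. Y \<subseteq> X \<and> Y \<noteq> {} \<and> closed Y \<and> (\<forall>g. \<forall>y\<in>Y. act g y \<in> Y) \<longrightarrow> Y = X)"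

definition factor_map :: "'a::metric_space set \<Rightarrow> ('g \<Rightarrow> 'a \<Rightarrow> 'a) \<Rightarrow>
    'b::metric_space set \<Rightarrow> ('g \<Rightarrow> 'b \<Rightarrow> 'b) \<Rightarrow> ('a \<Rightarrow> 'b) \<Rightarrow> bool" where
  "factor_map X act Y actY p \<longleftrightarrow> continuous_on X p \<and> p ` X = Y \<and>
     (\<forall>g. \<forall>x\<in>X. p (act g x) = actY g (p x))"

definition equicontinuous_action :: "'a::metric_space set \<Rightarrow> ('g \<Rightarrow> 'a \<Rightarrow> 'a) \<Rightarrow> bool" where
  "equicontinuous_action X act \<longleftrightarrow>
     (\<forall>x\<in>X. \<forall>e>0. \<exists>d>0. \<forall>y\<in>X. dist x y < d \<longrightarrow> (\<forall>g. dist (act g x) (act g y) < e))"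

text \<open>Every compact metric space is homeomorphic to a
  compact subset of the Hilbert-cube type nat \<Rightarrow> real (product topology), so quantifying
  over equicontinuous factors living in that type covers all equicontinuous factors
  up to isomorphism.\<close>
definition max_equicontinuous_factor ::
  "'a::metric_space set \<Rightarrow> ('g::topological_ab_group_add \<Rightarrow> 'a \<Rightarrow> 'a) \<Rightarrow>
   'e::metric_space set \<Rightarrow> ('g \<Rightarrow> 'e \<Rightarrow> 'e) \<Rightarrow> ('a \<Rightarrow> 'e) \<Rightarrow> bool" where
  "max_equicontinuous_factor X act E actE peq \<longleftrightarrow>
     cont_action E actE \<and> factor_map X act E actE peq \<and> equicontinuous_action E actE \<and>
     (\<forall>(Z :: (nat \<Rightarrow> real) set) actZ q.
        cont_action Z actZ \<and> factor_map X act Z actZ q \<and> equicontinuous_action Z actZ \<longrightarrow>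
        (\<exists>\<psi>. factor_map E actE Z actZ \<psi> \<and> (\<forall>x\<in>X. q x = \<psi> (peq x))))"

definition kernel_rel :: "'a set \<Rightarrow> ('a \<Rightarrow> 'b) \<Rightarrow> ('a \<times> 'a) set" where
  "kernel_rel X \<phi> = {(x, y). x \<in> X \<and> y \<in> X \<and> \<phi> x = \<phi> y}"

definition mMEF_map :: "nat \<Rightarrow> 'a set \<Rightarrow> ('a \<Rightarrow> 'e) \<Rightarrow> ('a \<Rightarrow> 'b) \<Rightarrow> bool" where
  "mMEF_map m X peq \<pi> \<longleftrightarrow>
     (\<forall>A \<in> X // kernel_rel X peq. \<exists>B. (\<forall>i < m - 1. B i \<in> X // kernel_rel X \<pi>) \<and>
        A = (\<Union>i < m - 1. B i))"

definition m_equicontinuous :: "nat \<Rightarrow> 'a::metric_space set \<Rightarrow> ('g \<Rightarrow> 'a \<Rightarrow> 'a) \<Rightarrow> bool" where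
  "m_equicontinuous m X act \<longleftrightarrow>
     (\<forall>x\<in>X. \<forall>e>0. \<exists>d>0. \<forall>xs :: nat \<Rightarrow> 'a.
        (\<forall>i<m. xs i \<in> X \<and> xs i \<in> ball x d) \<longrightarrow>
        (\<forall>g. \<exists>i<m. \<exists>j<m. i \<noteq> j \<and> dist (act g (xs i)) (act g (xs j)) < e))"

end

theory Submission
  imports Defs
begin

lemma mMEF_factor:
  assumes "mMEF_map m X peq \<pi>" "a \<in> X" "b \<in> X" "\<pi> a = \<pi> b"
  shows "peq a = peq b"
proof -
  let ?A = "kernel_rel X peq `` {a}"
  have A: "?A \<in> X // kernel_rel X peq" using assms(2) by (rule quotientI)
  then obtain B where B: "\<forall>i < m - 1. B i \<in> X // kernel_rel X \<pi>" "?A = (\<Union>i < m - 1. B i)"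
    using assms(1) unfolding mMEF_map_def by blast
  have "a \<in> ?A" using assms(2) by (simp add: kernel_rel_def)
  then obtain k where k: "k < m - 1" "a \<in> B k" using B(2) by blast
  then obtain c where c: "B k = kernel_rel X \<pi> `` {c}" "c \<in> X"
    using B(1) by (meson quotientE)
  have "b \<in> B k" using k(2) c assms by (simp add: kernel_rel_def)
  hence "b \<in> ?A" using B(2) k(1) by blast
  thus ?thesis by (simp add: kernel_rel_def)
qed

lemma mMEF_fiber:
  assumes "mMEF_map m X peq \<pi>" "a0 \<in> X"
  shows "\<exists>c. \<forall>a\<in>X. peq a = peq a0 \<longrightarrow> (\<exists>k<m-1. \<pi> a = c k)"
proof -
  let ?A = "kernel_rel X peq `` {a0}"
  have A: "?A \<in> X // kernel_rel X peq" using assms(2) by (rule quotientI)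
  then obtain B where B: "\<forall>i < m - 1. B i \<in> X // kernel_rel X \<pi>" "?A = (\<Union>i < m - 1. B i)"
    using assms(1) unfolding mMEF_map_def by blast
  have "\<forall>i. \<exists>c. i < m - 1 \<longrightarrow> B i = kernel_rel X \<pi> `` {c}"
    using B(1) by (meson quotientE)
  then obtain cc where cc: "\<And>i. i < m - 1 \<Longrightarrow> B i = kernel_rel X \<pi> `` {cc i}" by metis
  show ?thesis
  proof (intro exI[of _ "\<lambda>i. \<pi> (cc i)"] ballI impI)
    fix a assume "a \<in> X" "peq a = peq a0"
    hence "a \<in> ?A" using assms(2) by (simp add: kernel_rel_def)
    then obtain k where k: "k < m - 1" "a \<in> B k" using B(2) by blast
    thus "\<exists>k<m-1. \<pi> a = \<pi> (cc k)" using cc[OF k(1)] by (auto simp: kernel_rel_def)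
  qed
qed

lemma sep_image:
  assumes "compact C" "continuous_on C f" "x \<notin> f ` C"
  shows "\<exists>d>0. \<forall>y\<in>C. d \<le> dist x (f y)"
proof -
  have "closed (f ` C)" using assms by (intro compact_imp_closed compact_continuous_image)
  hence "open (- f ` C)" by auto
  then obtain d where "d > 0" "ball x d \<subseteq> - f ` C" using assms(3) open_contains_ball by blast
  thus ?thesis by (metis ComplD image_eqI leI mem_ball subsetD)
qed

theorem lemma4p14:
  fixes m :: nat
    and X :: "'a::metric_space set" and act :: "'g::topological_ab_group_add \<Rightarrow> 'a \<Rightarrow> 'a"
    and X' :: "'b::metric_space set" and act' :: "'g \<Rightarrow> 'b \<Rightarrow> 'b"
    and E :: "'e::metric_space set" and actE :: "'g \<Rightarrow> 'e \<Rightarrow> 'e"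
    and \<pi> :: "'a \<Rightarrow> 'b" and peq :: "'a \<Rightarrow> 'e"
  assumes "m \<ge> 2"
    and "locally_compact_space (euclidean :: 'g topology)"
    and "cont_action X act" and "minimal_action X act"
    and "cont_action X' act'" and "minimal_action X' act'"
    and "factor_map X act X' act' \<pi>"
    and "max_equicontinuous_factor X act E actE peq"
    and "mMEF_map m X peq \<pi>"
  shows "m_equicontinuous m X' act'"
proof -
  have cX: "compact X" and actX: "\<And>g x. x \<in> X \<Longrightarrow> act g x \<in> X"
    using assms(3) by (auto simp: cont_action_def)
  have pic: "continuous_on X \<pi>" and piX: "\<pi> ` X = X'"
    and pieq: "\<And>g x. x \<in> X \<Longrightarrow> \<pi> (act g x) = act' g (\<pi> x)"
    using assms(7) by (auto simp: factor_map_def)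
  have cE: "cont_action E actE" and fE: "factor_map X act E actE peq"
    and eqE: "equicontinuous_action E actE"
    using assms(8) by (auto simp: max_equicontinuous_factor_def)
  have pqc: "continuous_on X peq" and pqX: "peq ` X = E"
    and pqeq: "\<And>g x. x \<in> X \<Longrightarrow> peq (act g x) = actE g (peq x)"
    using fE by (auto simp: factor_map_def)
  have actE_in: "\<And>g e. e \<in> E \<Longrightarrow> actE g e \<in> E" using cE by (auto simp: cont_action_def)
  have cEE: "compact E" using cE by (auto simp: cont_action_def)
  have fac: "\<And>a b. a \<in> X \<Longrightarrow> b \<in> X \<Longrightarrow> \<pi> a = \<pi> b \<Longrightarrow> peq a = peq b"
    using mMEF_factor[OF assms(9)] by blast
  define lift where "lift y = (SOME a. a \<in> X \<and> \<pi> a = y)" for y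
  have lift: "\<And>y. y \<in> X' \<Longrightarrow> lift y \<in> X \<and> \<pi> (lift y) = y"
    unfolding lift_def using piX by (metis (mono_tags, lifting) imageE someI)
  define \<psi> where "\<psi> y = peq (lift y)" for y
  have psi: "\<And>a. a \<in> X \<Longrightarrow> \<psi> (\<pi> a) = peq a"
    unfolding \<psi>_def using lift fac piX by blast
  have psiE: "\<And>y. y \<in> X' \<Longrightarrow> \<psi> y \<in> E" using lift pqX unfolding \<psi>_def by blast
  have act'X: "\<And>g y. y \<in> X' \<Longrightarrow> act' g y \<in> X'"
    using assms(5) by (auto simp: cont_action_def)
  have psieq: "\<And>g y. y \<in> X' \<Longrightarrow> \<psi> (act' g y) = actE g (\<psi> y)"
    by (metis actX lift pieq pqeq psi)
  show ?thesis unfolding m_equicontinuous_def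
  proof (intro ballI allI impI)
    fix x e assume xX: "x \<in> X'" and e: "(e::real) > 0"
    have "\<forall>z\<in>E. \<exists>r>0. \<exists>c. \<forall>y\<in>X'. dist z (\<psi> y) < r \<longrightarrow> (\<exists>k<m-1. dist (c k) y < e/2)"
    proof
      fix z assume "z \<in> E"
      then obtain a0 where a0: "a0 \<in> X" "peq a0 = z" using pqX by blast
      obtain c where c: "\<forall>a\<in>X. peq a = peq a0 \<longrightarrow> (\<exists>k<m-1. \<pi> a = c k)"
        using mMEF_fiber[OF assms(9) a0(1)] by blast
      let ?U = "\<Union>k<m-1. ball (c k) (e/2)"
      define C where "C = X \<inter> \<pi> -` (- ?U)"
      have "closed (- ?U)" by (intro closed_Compl open_UN) auto
      hence "closed (X \<inter> \<pi> -` (- ?U))"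
        using continuous_closed_preimage[OF pic compact_imp_closed[OF cX]] by blast
      hence cC: "compact C" unfolding C_def using cX
        by (metis Int_lower1 compact_Int_closed inf.absorb_iff2)
      have "z \<notin> peq ` C"
      proof
        assume "z \<in> peq ` C"
        then obtain a where "a \<in> C" "peq a = z" by blast
        then obtain k where "k < m-1" "\<pi> a = c k" using c a0 C_def by auto
        thus False using \<open>a \<in> C\<close> e unfolding C_def by force
      qed
      then obtain r where r: "r > 0" "\<forall>a\<in>C. r \<le> dist z (peq a)"
        using sep_image[OF cC continuous_on_subset[OF pqc] \<open>z \<notin> peq ` C\<close>] C_def by blast
      have "\<forall>y\<in>X'. dist z (\<psi> y) < r \<longrightarrow> (\<exists>k<m-1. dist (c k) y < e/2)"
      proof (intro ballI impI)
        fix y assume y: "y \<in> X'" "dist z (\<psi> y) < r"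
        have "lift y \<notin> C" using r y unfolding \<psi>_def by force
        thus "\<exists>k<m-1. dist (c k) y < e/2" using lift[OF y(1)] unfolding C_def by auto
      qed
      thus "\<exists>r>0. \<exists>c. \<forall>y\<in>X'. dist z (\<psi> y) < r \<longrightarrow> (\<exists>k<m-1. dist (c k) y < e/2)"
        using r(1) by blast
    qed
    then obtain R cf where R: "\<And>z. z \<in> E \<Longrightarrow> R z > 0"
      and Rc: "\<And>z y. z \<in> E \<Longrightarrow> y \<in> X' \<Longrightarrow> dist z (\<psi> y) < R z \<Longrightarrow> (\<exists>k<m-1. dist (cf z k) y < e/2)"
      by metis
    obtain \<delta> where \<delta>: "\<delta> > 0" "\<And>z. z \<in> E \<Longrightarrow> \<exists>G \<in> (\<lambda>w. ball w (R w)) ` E. ball z \<delta> \<subseteq> G"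
    proof (rule Heine_Borel_lemma[OF cEE, of "(\<lambda>w. ball w (R w)) ` E"])
      show "E \<subseteq> \<Union> ((\<lambda>w. ball w (R w)) ` E)" using R by auto
    qed auto
    obtain d1 where d1: "d1 > 0" "\<And>y g. y \<in> E \<Longrightarrow> dist (\<psi> x) y < d1 \<Longrightarrow> dist (actE g (\<psi> x)) (actE g y) < \<delta>"
      using eqE psiE[OF xX] \<delta>(1) unfolding equicontinuous_action_def by metis
    define D where "D = X \<inter> peq -` (- ball (\<psi> x) d1)"
    have "closed (X \<inter> peq -` (- ball (\<psi> x) d1))"
      using continuous_closed_preimage[OF pqc compact_imp_closed[OF cX]] by (simp add: closed_Compl)
    hence cD: "compact D" unfolding D_def using cX
      by (metis Int_lower1 compact_Int_closed inf.absorb_iff2)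
    have "x \<notin> \<pi> ` D"
    proof
      assume "x \<in> \<pi> ` D"
      then obtain a where "a \<in> D" "\<pi> a = x" by blast
      thus False using psi d1(1) unfolding D_def by force
    qed
    then obtain d where d: "d > 0" "\<forall>a\<in>D. d \<le> dist x (\<pi> a)"
      using sep_image[OF cD continuous_on_subset[OF pic] \<open>x \<notin> \<pi> ` D\<close>] D_def by blast
    have cont: "\<And>y. y \<in> X' \<Longrightarrow> dist x y < d \<Longrightarrow> dist (\<psi> x) (\<psi> y) < d1"
    proof -
      fix y assume y: "y \<in> X'" "dist x y < d"
      have "lift y \<notin> D" using d y lift by force
      thus "dist (\<psi> x) (\<psi> y) < d1" using lift[OF y(1)] unfolding D_def \<psi>_def by auto
    qed
    show "\<exists>d>0. \<forall>xs. (\<forall>i<m. xs i \<in> X' \<and> xs i \<in> ball x d) \<longrightarrow>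
          (\<forall>g. \<exists>i<m. \<exists>j<m. i \<noteq> j \<and> dist (act' g (xs i)) (act' g (xs j)) < e)"
    proof (intro exI[of _ d] conjI allI impI)
      show "d > 0" by (rule d(1))
      fix xs g assume xs: "\<forall>i<m. xs i \<in> X' \<and> xs i \<in> ball x d"
      have z0: "actE g (\<psi> x) \<in> E" using actE_in psiE xX by blast
      then obtain w where w: "w \<in> E" "ball (actE g (\<psi> x)) \<delta> \<subseteq> ball w (R w)" using \<delta>(2) by blast
      have "\<forall>i<m. \<exists>k<m-1. dist (cf w k) (act' g (xs i)) < e/2"
      proof (intro allI impI)
        fix i assume "i < m"
        hence xi: "xs i \<in> X'" "dist x (xs i) < d" using xs by auto
        have "dist (actE g (\<psi> x)) (actE g (\<psi> (xs i))) < \<delta>"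
          using d1(2) cont[OF xi] psiE[OF xi(1)] by blast
        hence "dist w (\<psi> (act' g (xs i))) < R w" using w(2) psieq[OF xi(1)] by auto
        thus "\<exists>k<m-1. dist (cf w k) (act' g (xs i)) < e/2" using Rc[OF w(1) act'X[OF xi(1)]] by blast
      qed
      then obtain f where f: "\<And>i. i < m \<Longrightarrow> f i < m - 1 \<and> dist (cf w (f i)) (act' g (xs i)) < e/2"
        by metis
      have "\<not> inj_on f {..<m}"
      proof
        assume "inj_on f {..<m}"
        hence "card (f ` {..<m}) = m" by (simp add: card_image)
        moreover have "f ` {..<m} \<subseteq> {..<m-1}" using f by auto
        hence "card (f ` {..<m}) \<le> m - 1" by (metis card_lessThan card_mono finite_lessThan)
        ultimately show False using assms(1) by linarith
      qed
      then obtain i j where ij: "i < m" "j < m" "i \<noteq> j" "f i = f j"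
        unfolding inj_on_def by blast
      have "dist (act' g (xs i)) (act' g (xs j)) < e"
        using f[OF ij(1)] f[OF ij(2)] ij(4) dist_triangle_half_r by metis
      thus "\<exists>i<m. \<exists>j<m. i \<noteq> j \<and> dist (act' g (xs i)) (act' g (xs j)) < e" using ij by blast
    qed
  qed
qed

end
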